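(* Let $0<C<1$, $\epsilon=1/C-1$, $k=b/((1+\epsilon)\ln b)$, and let $b$ be sufficiently large. Let $T$ be a complete tree with branching factor $b$ and let $\sigma$ be a uniformly random proper $k$-coloring of $T$. Then for every vertex $v$ of $T$, the probability that $v$ is not frozen in $\sigma$ is at most $b^{-\epsilon}$. (Leaves are always frozen.)
   Context: For a coloring $\sigma$ of $T$ and a vertex $v$, let $T_v$ be the subtree rooted at $v$ and $L(T_v)$ its leaves. $v$ is frozen in $\sigma$ if every proper coloring $\eta$ of $T$ with $\eta(L(T_v))=\sigma(L(T_v))$ has $\eta(v)=\sigma(v)$. Equivalently, leaves are frozen, and a non-leaf $v$ is frozen iff for every color $c\ne\sigma(v)$ there is a frozen child $w$ of $v$ with $\sigma(w)=c$. *)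

theory Defs
  imports Complex_Main "HOL-Library.FuncSet"
begin

text \<open>Complete tree with branching factor b and depth n: vertices are words
over {0..<b} of length at most n; the root is [], the children of v are v @ [i]
(i < b); the leaves are the words of length exactly n.\<close>

definition tree_vertices :: "nat \<Rightarrow> nat \<Rightarrow> nat list set" where
  "tree_vertices b n = {xs. length xs \<le> n \<and> set xs \<subseteq> {..<b}}"

definition tree_leaves :: "nat \<Rightarrow> nat \<Rightarrow> nat list set" where
  "tree_leaves b n = {xs \<in> tree_vertices b n. length xs = n}"

definition subtree_leaves :: "nat \<Rightarrow> nat \<Rightarrow> nat list \<Rightarrow> nat list set" where
  "subtree_leaves b n v = {l \<in> tree_leaves b n. \<exists>w. l = v @ w}"

definition proper_colorings :: "nat \<Rightarrow> nat \<Rightarrow> nat \<Rightarrow> (nat list \<Rightarrow> nat) set" where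
  "proper_colorings b n k =
     {\<sigma> \<in> PiE (tree_vertices b n) (\<lambda>_. {..<k}).
        \<forall>v i. v @ [i] \<in> tree_vertices b n \<longrightarrow> \<sigma> v \<noteq> \<sigma> (v @ [i])}"

definition frozen :: "nat \<Rightarrow> nat \<Rightarrow> nat \<Rightarrow> (nat list \<Rightarrow> nat) \<Rightarrow> nat list \<Rightarrow> bool" where
  "frozen b n k \<sigma> v \<longleftrightarrow>
     (\<forall>\<eta> \<in> proper_colorings b n k.
        (\<forall>l \<in> subtree_leaves b n v. \<eta> l = \<sigma> l) \<longrightarrow> \<eta> v = \<sigma> v)"

definition prob_not_frozen :: "nat \<Rightarrow> nat \<Rightarrow> nat \<Rightarrow> nat list \<Rightarrow> real" where
  "prob_not_frozen b n k v =
     real (card {\<sigma> \<in> proper_colorings b n k. \<not> frozen b n k \<sigma> v})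
     / real (card (proper_colorings b n k))"

end

theory Submission
  imports Defs "HOL-Real_Asymp.Real_Asymp"
begin

fun nf :: "nat \<Rightarrow> nat \<Rightarrow> nat \<Rightarrow> (nat list \<Rightarrow> nat) \<Rightarrow> nat list \<Rightarrow> bool" where
  "nf b k 0 \<sigma> w = False"
| "nf b k (Suc m) \<sigma> w = (\<exists>c<k. c \<noteq> \<sigma> w \<and> (\<forall>i<b. \<sigma> (w@[i]) = c \<longrightarrow> nf b k m \<sigma> (w@[i])))"

lemma nf_cong:
  "(\<And>u. set u \<subseteq> {..<b} \<Longrightarrow> length u \<le> m \<Longrightarrow> \<sigma> (w@u) = \<sigma>' (w'@u))
   \<Longrightarrow> nf b k m \<sigma> w = nf b k m \<sigma>' w'"
proof (induction m arbitrary: w w')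
  case 0 then show ?case by simp
next
  case (Suc m)
  have e0: "\<sigma> w = \<sigma>' w'" using Suc.prems[of "[]"] by simp
  have e1: "\<sigma> (w@[i]) = \<sigma>' (w'@[i])" if "i < b" for i
    using Suc.prems[of "[i]"] that by simp
  have e2: "nf b k m \<sigma> (w@[i]) = nf b k m \<sigma>' (w'@[i])" if "i < b" for i
    apply (rule Suc.IH)
    using Suc.prems[of "i # _"] that by auto
  show ?case using e0 e1 e2 by simp
qed

lemma tv_finite: "finite (tree_vertices b n)"
proof -
  have "tree_vertices b n = {xs. set xs \<subseteq> {..<b} \<and> length xs \<le> n}"
    unfolding tree_vertices_def by auto
  then show ?thesis using finite_lists_length_le[of "{..<b}" n] by simp
qed

lemma pc_finite: "finite (proper_colorings b n k)"
proof -
  have "proper_colorings b n k \<subseteq> PiE (tree_vertices b n) (\<lambda>_. {..<k})"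
    unfolding proper_colorings_def by auto
  moreover have "finite (PiE (tree_vertices b n) (\<lambda>_. {..<k}))"
    by (intro finite_PiE tv_finite) auto
  ultimately show ?thesis by (rule finite_subset)
qed

lemma frozen_if_not_nf:
  assumes "v \<in> tree_vertices b n" "\<not> nf b k (n - length v) \<sigma> v"
  shows "frozen b n k \<sigma> v"
  using assms
proof (induction "n - length v" arbitrary: v)
  case 0
  then have "v \<in> subtree_leaves b n v"
    unfolding subtree_leaves_def tree_leaves_def tree_vertices_def by auto
  then show ?case unfolding frozen_def by auto
next
  case (Suc m)
  have m: "m = n - length (v@[i])" for i using Suc.hyps(2) by simp
  have vi: "v @ [i] \<in> tree_vertices b n" if "i < b" for i
    using Suc.prems(1) Suc.hyps(2) that unfolding tree_vertices_def by auto
  have key: "\<And>c. c < k \<Longrightarrow> c \<noteq> \<sigma> v \<Longrightarrow> \<exists>i<b. \<sigma> (v@[i]) = c \<and> \<not> nf b k m \<sigma> (v@[i])"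
    using Suc.prems(2) Suc.hyps(2)[symmetric] by auto
  show ?case unfolding frozen_def
  proof (intro ballI impI)
    fix \<eta> assume eta: "\<eta> \<in> proper_colorings b n k"
      and agree: "\<forall>l\<in>subtree_leaves b n v. \<eta> l = \<sigma> l"
    show "\<eta> v = \<sigma> v"
    proof (rule ccontr)
      assume ne: "\<eta> v \<noteq> \<sigma> v"
      have "\<eta> v < k" using eta Suc.prems(1) unfolding proper_colorings_def by auto
      then obtain i where i: "i < b" "\<sigma> (v@[i]) = \<eta> v" "\<not> nf b k m \<sigma> (v@[i])"
        using key ne by blast
      have fr: "frozen b n k \<sigma> (v@[i])"
        using Suc.hyps(1)[OF m vi[OF i(1)]] i(3) m by simp
      have "subtree_leaves b n (v@[i]) \<subseteq> subtree_leaves b n v"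
        unfolding subtree_leaves_def by auto
      then have "\<eta> (v@[i]) = \<sigma> (v@[i])"
        using fr eta agree unfolding frozen_def by blast
      moreover have "\<eta> v \<noteq> \<eta> (v@[i])"
        using eta vi[OF i(1)] unfolding proper_colorings_def by blast
      ultimately show False using i(2) by simp
    qed
  qed
qed

lemma tv_Cons[simp]: "(i # u \<in> tree_vertices b (Suc h)) \<longleftrightarrow> i < b \<and> u \<in> tree_vertices b h"
  unfolding tree_vertices_def by auto

lemma tv_Nil[simp]: "[] \<in> tree_vertices b h"
  unfolding tree_vertices_def by auto

lemma tv_snoc: "x @ [j] \<in> tree_vertices b n \<Longrightarrow> x \<in> tree_vertices b n"
  unfolding tree_vertices_def by auto

lemma tv_Suc_cases: "x \<in> tree_vertices b (Suc h) \<Longrightarrow> x = [] \<or> (\<exists>i u. x = i # u \<and> i < b \<and> u \<in> tree_vertices b h)"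
  by (cases x) auto

definition ch :: "nat \<Rightarrow> nat \<Rightarrow> nat \<Rightarrow> (nat list \<Rightarrow> nat) \<Rightarrow> (nat list \<Rightarrow> nat)" where
  "ch b h i \<delta> = (\<lambda>u. if u \<in> tree_vertices b h then \<delta> (i # u) else undefined)"

lemma ch_proper:
  assumes "\<delta> \<in> proper_colorings b (Suc h) k" "i < b"
  shows "ch b h i \<delta> \<in> proper_colorings b h k" "ch b h i \<delta> [] \<noteq> \<delta> []"
proof -
  have pe: "\<delta> \<in> PiE (tree_vertices b (Suc h)) (\<lambda>_. {..<k})"
   and pr: "\<And>v j. v @ [j] \<in> tree_vertices b (Suc h) \<Longrightarrow> \<delta> v \<noteq> \<delta> (v @ [j])"
    using assms(1) unfolding proper_colorings_def by auto
  have "ch b h i \<delta> \<in> PiE (tree_vertices b h) (\<lambda>_. {..<k})"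
    using pe assms(2) unfolding ch_def by (auto simp: PiE_def extensional_def Pi_def)
  moreover have "ch b h i \<delta> v \<noteq> ch b h i \<delta> (v @ [j])" if "v @ [j] \<in> tree_vertices b h" for v j
  proof -
    have "(i # v) @ [j] \<in> tree_vertices b (Suc h)" using that assms(2) by simp
    then show ?thesis using pr[of "i # v" j] that tv_snoc[OF that] unfolding ch_def by auto
  qed
  ultimately show "ch b h i \<delta> \<in> proper_colorings b h k" unfolding proper_colorings_def by auto
  have "[] @ [i] \<in> tree_vertices b (Suc h)" using assms(2) by simp
  then show "ch b h i \<delta> [] \<noteq> \<delta> []" using pr[of "[]" i] unfolding ch_def by auto
qed

lemma child_card:
  assumes "a < k"
  shows "card {\<delta> \<in> proper_colorings b (Suc h) k. \<delta> [] = a \<and> (\<forall>i<b. Q (ch b h i \<delta>))}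
       = card {\<delta>' \<in> proper_colorings b h k. \<delta>' [] \<noteq> a \<and> Q \<delta>'} ^ b"
proof -
  define A where "A = {\<delta> \<in> proper_colorings b (Suc h) k. \<delta> [] = a \<and> (\<forall>i<b. Q (ch b h i \<delta>))}"
  define S where "S = {\<delta>' \<in> proper_colorings b h k. \<delta>' [] \<noteq> a \<and> Q \<delta>'}"
  define f where "f = (\<lambda>\<delta>. \<lambda>i\<in>{..<b}. ch b h i \<delta>)"
  define g where "g = (\<lambda>F::nat \<Rightarrow> nat list \<Rightarrow> nat. \<lambda>x. if x \<in> tree_vertices b (Suc h) then
       (case x of [] \<Rightarrow> a | i # u \<Rightarrow> F i u) else undefined)"
  have "bij_betw f A (PiE {..<b} (\<lambda>_. S))"
  proof (rule bij_betw_byWitness[where f'=g])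
    show "\<forall>\<delta>\<in>A. g (f \<delta>) = \<delta>"
    proof
      fix \<delta> assume d: "\<delta> \<in> A"
      then have pe: "\<delta> \<in> PiE (tree_vertices b (Suc h)) (\<lambda>_. {..<k})" and d0: "\<delta> [] = a"
        unfolding A_def proper_colorings_def by auto
      show "g (f \<delta>) = \<delta>"
      proof
        fix x show "g (f \<delta>) x = \<delta> x"
        proof (cases "x \<in> tree_vertices b (Suc h)")
          case True
          then show ?thesis using tv_Suc_cases[OF True] d0
            unfolding g_def f_def ch_def by auto
        next
          case False then show ?thesis using pe unfolding g_def by (auto simp: PiE_def extensional_def)
        qed
      qed
    qed
    show "\<forall>F\<in>PiE {..<b} (\<lambda>_. S). f (g F) = F"
    proof
      fix F assume F: "F \<in> PiE {..<b} (\<lambda>_. S)"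
      show "f (g F) = F"
      proof
        fix i show "f (g F) i = F i"
        proof (cases "i < b")
          case True
          have Fi: "F i \<in> PiE (tree_vertices b h) (\<lambda>_. {..<k})"
            using F True unfolding S_def proper_colorings_def by auto
          show ?thesis
          proof
            fix u show "f (g F) i u = F i u"
              using True Fi unfolding f_def g_def ch_def by (auto simp: PiE_def extensional_def)
          qed
        next
          case False then show ?thesis using F unfolding f_def by (auto simp: PiE_def extensional_def)
        qed
      qed
    qed
    show "f ` A \<subseteq> PiE {..<b} (\<lambda>_. S)"
    proof
      fix F assume "F \<in> f ` A"
      then obtain \<delta> where d: "\<delta> \<in> A" and F: "F = f \<delta>" by auto
      have "ch b h i \<delta> \<in> S" if "i < b" for i
        using ch_proper[of \<delta> b h k i] d that unfolding A_def S_def by auto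
      then show "F \<in> PiE {..<b} (\<lambda>_. S)" unfolding F f_def by auto
    qed
    show "g ` PiE {..<b} (\<lambda>_. S) \<subseteq> A"
    proof
      fix x assume "x \<in> g ` PiE {..<b} (\<lambda>_. S)"
      then obtain F where F: "F \<in> PiE {..<b} (\<lambda>_. S)" and x: "x = g F" by auto
      have FS: "F i \<in> S" if "i < b" for i using F that by auto
      have Fpe: "F i \<in> PiE (tree_vertices b h) (\<lambda>_. {..<k})" if "i < b" for i
        using FS[OF that] unfolding S_def proper_colorings_def by auto
      have Fpr: "F i v \<noteq> F i (v @ [j])" if "i < b" "v @ [j] \<in> tree_vertices b h" for i v j
        using FS[OF that(1)] that(2) unfolding S_def proper_colorings_def by auto
      have F0: "F i [] \<noteq> a" if "i < b" for i using FS[OF that] unfolding S_def by auto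
      have FQ: "Q (F i)" if "i < b" for i using FS[OF that] unfolding S_def by auto
      have pe: "g F \<in> PiE (tree_vertices b (Suc h)) (\<lambda>_. {..<k})"
      proof -
        have "g F y \<in> {..<k}" if "y \<in> tree_vertices b (Suc h)" for y
          using tv_Suc_cases[OF that] assms Fpe unfolding g_def by (auto simp: PiE_def Pi_def)
        then show ?thesis unfolding g_def by (auto simp: PiE_def extensional_def Pi_def)
      qed
      have pr: "g F v \<noteq> g F (v @ [j])" if "v @ [j] \<in> tree_vertices b (Suc h)" for v j
      proof (cases v)
        case Nil
        then have "j < b" using that by simp
        then show ?thesis using F0 that Nil unfolding g_def by auto
      next
        case (Cons i u)
        then have "i < b" "u @ [j] \<in> tree_vertices b h" using that by auto
        then show ?thesis using Fpr Cons that tv_snoc[OF that] unfolding g_def by auto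
      qed
      have ch: "ch b h i (g F) = F i" if "i < b" for i
      proof
        fix u show "ch b h i (g F) u = F i u"
          using that Fpe[OF that] unfolding ch_def g_def by (auto simp: PiE_def extensional_def)
      qed
      show "x \<in> A" unfolding x A_def proper_colorings_def using pe pr ch FQ
        by (auto simp: g_def)
    qed
  qed
  then have "card A = card (PiE {..<b} (\<lambda>_. S))" by (rule bij_betw_same_card)
  also have "\<dots> = card S ^ b" by (simp add: card_PiE)
  finally show ?thesis unfolding A_def S_def .
qed

lemma card_by_root:
  assumes "S \<subseteq> proper_colorings b h k" "T \<subseteq> {..<k}" "\<And>x. x \<in> S \<Longrightarrow> x [] \<in> T"
  shows "card S = (\<Sum>a\<in>T. card {x \<in> S. x [] = a})"
proof -
  have fS: "finite S" using assms(1) pc_finite finite_subset by blast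
  have fT: "finite T" using assms(2) finite_subset by blast
  have "(\<Sum>a\<in>T. \<Sum>x\<in>{x \<in> S. x [] = a}. (1::nat)) = (\<Sum>x\<in>S. 1)"
    by (rule sum.group[OF fS fT]) (use assms(3) in auto)
  then show ?thesis by simp
qed

fun Nf :: "nat \<Rightarrow> nat \<Rightarrow> nat \<Rightarrow> nat" where
  "Nf b k 0 = 1"
| "Nf b k (Suc h) = ((k - 1) * Nf b k h) ^ b"

lemma col0: "card {\<delta> \<in> proper_colorings b 0 k. \<delta> [] = a} = (if a < k then 1 else 0)"
proof -
  have tv0: "tree_vertices b 0 = {[]}" unfolding tree_vertices_def by auto
  have "{\<delta> \<in> proper_colorings b 0 k. \<delta> [] = a} = (if a < k then {(\<lambda>x. if x = [] then a else undefined)} else {})"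
  proof (cases "a < k")
    case True
    have "\<delta> = (\<lambda>x. if x = [] then a else undefined)" if "\<delta> \<in> PiE {[]} (\<lambda>_. {..<k})" "\<delta> [] = a" for \<delta>
      using that by (auto simp: PiE_def extensional_def)
    moreover have "(v @ [i]) \<notin> tree_vertices b 0" for v i unfolding tv0 by simp
    ultimately show ?thesis using True unfolding proper_colorings_def tv0
      by (auto simp: PiE_def extensional_def)
  next
    case False then show ?thesis unfolding proper_colorings_def tv0 by (auto simp: PiE_def)
  qed
  then show ?thesis by simp
qed

lemma ch_root: "ch b h i \<delta> [] = \<delta> [i]" unfolding ch_def by simp

lemma ch_nf: "nf b k h (ch b h i \<delta>) [] = nf b k h \<delta> [i]"
  by (rule nf_cong) (auto simp: ch_def tree_vertices_def)

lemma subtree_bound: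
  assumes k2: "2 \<le> k" and beta: "0 \<le> \<beta>"
    and ineq: "real (k-1) * (real k - 2 + \<beta>)^b \<le> \<beta> * real (k-1)^b"
  shows "\<forall>a<k. card {\<delta> \<in> proper_colorings b h k. \<delta> [] = a} = Nf b k h \<and>
     real (card {\<delta> \<in> proper_colorings b h k. \<delta> [] = a \<and> nf b k h \<delta> []}) \<le> \<beta> * real (Nf b k h)"
proof (induction h)
  case 0
  then show ?case using col0 beta by simp
next
  case (Suc h)
  let ?P = "proper_colorings b h k"
  let ?N = "Nf b k h"
  have IH1: "card {\<delta> \<in> ?P. \<delta> [] = a} = ?N" if "a < k" for a using Suc.IH that by blast
  have IH2: "real (card {\<delta> \<in> ?P. \<delta> [] = a \<and> nf b k h \<delta> []}) \<le> \<beta> * real ?N" if "a < k" for a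
    using Suc.IH that by blast
  have cardT: "card ({..<k} - {a}) = k - 1" if "a < k" for a using that by simp
  show ?case
  proof (intro allI impI conjI)
    fix a assume a: "a < k"
    have ncol: "card {\<delta>' \<in> ?P. \<delta>' [] \<noteq> a} = (k - 1) * ?N"
    proof -
      have "card {\<delta>' \<in> ?P. \<delta>' [] \<noteq> a} = (\<Sum>a'\<in>{..<k} - {a}. card {x \<in> {\<delta>' \<in> ?P. \<delta>' [] \<noteq> a}. x [] = a'})"
        by (rule card_by_root) (auto simp: proper_colorings_def PiE_def Pi_def)
      also have "\<dots> = (\<Sum>a'\<in>{..<k} - {a}. ?N)"
      proof (rule sum.cong)
        fix a' assume "a' \<in> {..<k} - {a}"
        then have "{x \<in> {\<delta>' \<in> ?P. \<delta>' [] \<noteq> a}. x [] = a'} = {\<delta> \<in> ?P. \<delta> [] = a'}" "a' < k" by auto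
        then show "card {x \<in> {\<delta>' \<in> ?P. \<delta>' [] \<noteq> a}. x [] = a'} = ?N" using IH1 by simp
      qed simp
      finally show ?thesis using cardT[OF a] by simp
    qed
    have "card {\<delta> \<in> proper_colorings b (Suc h) k. \<delta> [] = a}
        = card {\<delta> \<in> proper_colorings b (Suc h) k. \<delta> [] = a \<and> (\<forall>i<b. (\<lambda>_. True) (ch b h i \<delta>))}"
      by simp
    also have "\<dots> = card {\<delta>' \<in> ?P. \<delta>' [] \<noteq> a \<and> True} ^ b" by (rule child_card[OF a])
    also have "\<dots> = Nf b k (Suc h)" using ncol by simp
    finally show "card {\<delta> \<in> proper_colorings b (Suc h) k. \<delta> [] = a} = Nf b k (Suc h)" .
    define Q where "Q = (\<lambda>c \<delta>'. \<delta>' [] = c \<longrightarrow> nf b k h \<delta>' [])"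
    define Ac where "Ac = (\<lambda>c. {\<delta> \<in> proper_colorings b (Suc h) k. \<delta> [] = a \<and> (\<forall>i<b. Q c (ch b h i \<delta>))})"
    have sub: "{\<delta> \<in> proper_colorings b (Suc h) k. \<delta> [] = a \<and> nf b k (Suc h) \<delta> []}
        \<subseteq> (\<Union>c\<in>{..<k} - {a}. Ac c)"
      unfolding Ac_def Q_def by (auto simp: ch_root ch_nf)
    have inner: "real (card {\<delta>' \<in> ?P. \<delta>' [] \<noteq> a \<and> Q c \<delta>'}) \<le> (real k - 2 + \<beta>) * real ?N"
      if c: "c \<in> {..<k} - {a}" for c
    proof -
      have "card {\<delta>' \<in> ?P. \<delta>' [] \<noteq> a \<and> Q c \<delta>'} = (\<Sum>a'\<in>{..<k} - {a}. card {x \<in> {\<delta>' \<in> ?P. \<delta>' [] \<noteq> a \<and> Q c \<delta>'}. x [] = a'})"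
        by (rule card_by_root) (auto simp: proper_colorings_def PiE_def Pi_def)
      then have "real (card {\<delta>' \<in> ?P. \<delta>' [] \<noteq> a \<and> Q c \<delta>'}) = (\<Sum>a'\<in>{..<k} - {a}. real (card {x \<in> {\<delta>' \<in> ?P. \<delta>' [] \<noteq> a \<and> Q c \<delta>'}. x [] = a'}))"
        by simp
      also have "\<dots> \<le> (\<Sum>a'\<in>{..<k} - {a}. if a' = c then \<beta> * real ?N else real ?N)"
      proof (rule sum_mono)
        fix a' assume a': "a' \<in> {..<k} - {a}"
        show "real (card {x \<in> {\<delta>' \<in> ?P. \<delta>' [] \<noteq> a \<and> Q c \<delta>'}. x [] = a'}) \<le> (if a' = c then \<beta> * real ?N else real ?N)"
        proof (cases "a' = c")
          case True
          then have "{x \<in> {\<delta>' \<in> ?P. \<delta>' [] \<noteq> a \<and> Q c \<delta>'}. x [] = a'} = {\<delta> \<in> ?P. \<delta> [] = c \<and> nf b k h \<delta> []}"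
            using a' unfolding Q_def by auto
          then show ?thesis using True IH2[of c] c by simp
        next
          case False
          then have "{x \<in> {\<delta>' \<in> ?P. \<delta>' [] \<noteq> a \<and> Q c \<delta>'}. x [] = a'} = {\<delta> \<in> ?P. \<delta> [] = a'}"
            using a' unfolding Q_def by auto
          then show ?thesis using False IH1[of a'] a' by simp
        qed
      qed
      also have "\<dots> = \<beta> * real ?N + (\<Sum>a'\<in>{..<k} - {a} - {c}. real ?N)"
        using c by (simp add: sum.remove[of _ c])
      also have "\<dots> = \<beta> * real ?N + real (k - 2) * real ?N"
      proof -
        have "card ({..<k} - {a} - {c}) = k - 2" using c a by (simp add: card_Diff_subset)
        then show ?thesis by simp
      qed
      also have "\<dots> = (real k - 2 + \<beta>) * real ?N" using k2 by (simp add: of_nat_diff algebra_simps)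
      finally show ?thesis .
    qed
    have fin: "finite (proper_colorings b (Suc h) k)" by (rule pc_finite)
    have "card {\<delta> \<in> proper_colorings b (Suc h) k. \<delta> [] = a \<and> nf b k (Suc h) \<delta> []}
        \<le> card (\<Union>c\<in>{..<k} - {a}. Ac c)"
      by (rule card_mono[OF _ sub]) (auto simp: Ac_def intro: finite_subset[OF _ fin])
    also have "\<dots> \<le> (\<Sum>c\<in>{..<k} - {a}. card (Ac c))" by (rule card_UN_le) simp
    finally have "real (card {\<delta> \<in> proper_colorings b (Suc h) k. \<delta> [] = a \<and> nf b k (Suc h) \<delta> []})
        \<le> (\<Sum>c\<in>{..<k} - {a}. real (card (Ac c)))" unfolding of_nat_sum[symmetric] of_nat_le_iff .
    also have "\<dots> \<le> (\<Sum>c\<in>{..<k} - {a}. ((real k - 2 + \<beta>) * real ?N) ^ b)"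
    proof (rule sum_mono)
      fix c assume c: "c \<in> {..<k} - {a}"
      have "card (Ac c) = card {\<delta>' \<in> ?P. \<delta>' [] \<noteq> a \<and> Q c \<delta>'} ^ b"
        unfolding Ac_def by (rule child_card[OF a])
      then show "real (card (Ac c)) \<le> ((real k - 2 + \<beta>) * real ?N) ^ b"
        using inner[OF c] by (simp add: power_mono)
    qed
    also have "\<dots> = real (k - 1) * ((real k - 2 + \<beta>) ^ b * real ?N ^ b)"
      using cardT[OF a] by (simp add: power_mult_distrib)
    also have "\<dots> = (real (k - 1) * (real k - 2 + \<beta>) ^ b) * real ?N ^ b" by simp
    also have "\<dots> \<le> (\<beta> * real (k-1)^b) * real ?N ^ b"
      by (rule mult_right_mono[OF ineq]) simp
    also have "\<dots> = \<beta> * real (Nf b k (Suc h))" by (simp add: power_mult_distrib)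
    finally show "real (card {\<delta> \<in> proper_colorings b (Suc h) k. \<delta> [] = a \<and> nf b k (Suc h) \<delta> []})
        \<le> \<beta> * real (Nf b k (Suc h))" .
  qed
qed

lemma bij_card_filter:
  assumes "bij_betw f A B"
  shows "card {x \<in> A. P (f x)} = card {y \<in> B. P y}"
proof -
  have "bij_betw f {x \<in> A. P (f x)} {y \<in> B. P y}"
    using assms unfolding bij_betw_def by (auto intro: inj_on_subset)
  then show ?thesis by (rule bij_betw_same_card)
qed

lemma snoc_prefix: "x @ [j] = v @ u \<Longrightarrow> u \<noteq> [] \<Longrightarrow> \<exists>w. x = v @ w"
  by (cases u rule: rev_cases) auto

lemma tv_append:
  assumes "v \<in> tree_vertices b n"
  shows "v @ u \<in> tree_vertices b n \<longleftrightarrow> u \<in> tree_vertices b (n - length v)"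
  using assms unfolding tree_vertices_def by auto

lemma top_bound:
  assumes k2: "2 \<le> k" and beta: "0 \<le> \<beta>"
    and ineq: "real (k-1) * (real k - 2 + \<beta>)^b \<le> \<beta> * real (k-1)^b"
    and vV: "v \<in> tree_vertices b n"
  shows "real (card {\<sigma> \<in> proper_colorings b n k. nf b k (n - length v) \<sigma> v})
       \<le> \<beta> * real (card (proper_colorings b n k))"
proof -
  define h where "h = n - length v"
  define V where "V = tree_vertices b n"
  define P where "P = proper_colorings b n k"
  define desc where "desc = (\<lambda>x. \<exists>u. u \<noteq> [] \<and> x = v @ u)"
  define R where "R = (\<lambda>\<sigma>::nat list \<Rightarrow> nat. \<lambda>x. if x \<in> V \<and> \<not> desc x then \<sigma> x else undefined)"
  define f where "f = (\<lambda>\<sigma>::nat list \<Rightarrow> nat. \<lambda>u. if u \<in> tree_vertices b h then \<sigma> (v @ u) else undefined)"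
  define f' where "f' = (\<lambda>\<tau> (\<delta>::nat list \<Rightarrow> nat) x. if x \<in> V then (if \<exists>u. x = v @ u then \<delta> (drop (length v) x) else \<tau> x) else undefined)"
  have tva: "v @ u \<in> V \<longleftrightarrow> u \<in> tree_vertices b h" for u
    unfolding V_def h_def using tv_append[OF vV] .
  have vinV: "v \<in> V" using vV V_def by simp
  have nd: "\<not> desc v" unfolding desc_def by simp
  have finP: "finite P" unfolding P_def by (rule pc_finite)
  have Ppe: "\<sigma> \<in> PiE V (\<lambda>_. {..<k})" if "\<sigma> \<in> P" for \<sigma>
    using that unfolding P_def V_def proper_colorings_def by auto
  have Ppr: "\<sigma> x \<noteq> \<sigma> (x @ [j])" if "\<sigma> \<in> P" "x @ [j] \<in> V" for \<sigma> x j
    using that unfolding P_def V_def proper_colorings_def by auto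
  have snocV: "x @ [j] \<in> V \<Longrightarrow> x \<in> V" for x j unfolding V_def by (rule tv_snoc)
  have fib: "bij_betw f {\<sigma> \<in> P. R \<sigma> = \<tau>} {\<delta> \<in> proper_colorings b h k. \<delta> [] = \<tau> v}"
    if t: "\<tau> \<in> R ` P" for \<tau>
  proof -
    obtain \<sigma>0 where s0: "\<sigma>0 \<in> P" and tau: "\<tau> = R \<sigma>0" using t by auto
    show ?thesis
    proof (rule bij_betw_byWitness[where f'="f' \<tau>"])
      show "\<forall>\<sigma>\<in>{\<sigma> \<in> P. R \<sigma> = \<tau>}. f' \<tau> (f \<sigma>) = \<sigma>"
      proof (intro ballI ext)
        fix \<sigma> x assume s: "\<sigma> \<in> {\<sigma> \<in> P. R \<sigma> = \<tau>}"
        show "f' \<tau> (f \<sigma>) x = \<sigma> x"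
        proof (cases "x \<in> V")
          case True
          show ?thesis
          proof (cases "\<exists>u. x = v @ u")
            case True
            then obtain u where x: "x = v @ u" by auto
            then have "u \<in> tree_vertices b h" using \<open>x \<in> V\<close> tva by simp
            then show ?thesis using \<open>x \<in> V\<close> x unfolding f'_def f_def by auto
          next
            case False
            then have "\<not> desc x" unfolding desc_def by auto
            then show ?thesis using False \<open>x \<in> V\<close> s unfolding f'_def R_def by auto
          qed
        next
          case False
          then show ?thesis using Ppe[of \<sigma>] s unfolding f'_def by (auto simp: PiE_def extensional_def)
        qed
      qed
      show "\<forall>\<delta>\<in>{\<delta> \<in> proper_colorings b h k. \<delta> [] = \<tau> v}. f (f' \<tau> \<delta>) = \<delta>"
      proof (intro ballI ext)
        fix \<delta> u assume d: "\<delta> \<in> {\<delta> \<in> proper_colorings b h k. \<delta> [] = \<tau> v}"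
        show "f (f' \<tau> \<delta>) u = \<delta> u"
        proof (cases "u \<in> tree_vertices b h")
          case True then show ?thesis using tva unfolding f_def f'_def by auto
        next
          case False then show ?thesis using d unfolding f_def proper_colorings_def
            by (auto simp: PiE_def extensional_def)
        qed
      qed
      show "f ` {\<sigma> \<in> P. R \<sigma> = \<tau>} \<subseteq> {\<delta> \<in> proper_colorings b h k. \<delta> [] = \<tau> v}"
      proof
        fix \<delta> assume "\<delta> \<in> f ` {\<sigma> \<in> P. R \<sigma> = \<tau>}"
        then obtain \<sigma> where s: "\<sigma> \<in> P" "R \<sigma> = \<tau>" and d: "\<delta> = f \<sigma>" by auto
        have pe: "f \<sigma> \<in> PiE (tree_vertices b h) (\<lambda>_. {..<k})"
          using Ppe[OF s(1)] tva unfolding f_def by (auto simp: PiE_def extensional_def Pi_def)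
        have pr: "f \<sigma> x \<noteq> f \<sigma> (x @ [j])" if "x @ [j] \<in> tree_vertices b h" for x j
        proof -
          have "(v @ x) @ [j] \<in> V" using tva[of "x @ [j]"] that by simp
          then show ?thesis using Ppr[OF s(1), of "v @ x" j] that tv_snoc[OF that] unfolding f_def by simp
        qed
        have "f \<sigma> [] = \<tau> v" using s(2) vinV nd unfolding f_def R_def by auto
        then show "\<delta> \<in> {\<delta> \<in> proper_colorings b h k. \<delta> [] = \<tau> v}"
          using pe pr d unfolding proper_colorings_def by auto
      qed
      show "f' \<tau> ` {\<delta> \<in> proper_colorings b h k. \<delta> [] = \<tau> v} \<subseteq> {\<sigma> \<in> P. R \<sigma> = \<tau>}"
      proof
        fix \<sigma> assume "\<sigma> \<in> f' \<tau> ` {\<delta> \<in> proper_colorings b h k. \<delta> [] = \<tau> v}"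
        then obtain \<delta> where d: "\<delta> \<in> proper_colorings b h k" "\<delta> [] = \<tau> v" and s: "\<sigma> = f' \<tau> \<delta>" by auto
        have dpe: "\<delta> \<in> PiE (tree_vertices b h) (\<lambda>_. {..<k})"
          and dpr: "\<And>x j. x @ [j] \<in> tree_vertices b h \<Longrightarrow> \<delta> x \<noteq> \<delta> (x @ [j])"
          using d(1) unfolding proper_colorings_def by auto
        have tauv: "\<tau> v = \<sigma>0 v" using vinV nd unfolding tau R_def by simp
        have taux: "\<tau> x = \<sigma>0 x" if "x \<in> V" "\<not> (\<exists>u. x = v @ u)" for x
          using that unfolding tau R_def desc_def by auto
        have fv: "f' \<tau> \<delta> (v @ u) = \<delta> u" if "u \<in> tree_vertices b h" for u
          using that tva unfolding f'_def by simp
        have fo: "f' \<tau> \<delta> x = \<sigma>0 x" if "x \<in> V" "\<not> (\<exists>u. x = v @ u)" for x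
          using that taux[OF that] unfolding f'_def by simp
        have fout: "f' \<tau> \<delta> x = undefined" if "x \<notin> V" for x
          using that unfolding f'_def by simp
        have pe: "f' \<tau> \<delta> \<in> PiE V (\<lambda>_. {..<k})"
        proof -
          have "f' \<tau> \<delta> x \<in> {..<k}" if "x \<in> V" for x
          proof (cases "\<exists>u. x = v @ u")
            case True
            then obtain u where x: "x = v @ u" by auto
            then have u: "u \<in> tree_vertices b h" using that tva by simp
            have "\<delta> u \<in> {..<k}" using dpe u by (simp add: PiE_iff)
            then show ?thesis using fv[OF u] x by simp
          next
            case False
            have "\<sigma>0 x \<in> {..<k}" using Ppe[OF s0] that by (simp add: PiE_iff)
            then show ?thesis using fo[OF that False] by simp
          qed
          then show ?thesis using fout by (simp add: PiE_iff extensional_def)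
        qed
        have pr: "f' \<tau> \<delta> x \<noteq> f' \<tau> \<delta> (x @ [j])" if xj: "x @ [j] \<in> V" for x j
        proof -
          have xV: "x \<in> V" using snocV[OF xj] .
          show ?thesis
          proof (cases "\<exists>u. x = v @ u")
            case True
            then obtain u where x: "x = v @ u" by auto
            then have uj: "u @ [j] \<in> tree_vertices b h" using xj tva[of "u @ [j]"] by simp
            have u: "u \<in> tree_vertices b h" using tv_snoc[OF uj] .
            have "f' \<tau> \<delta> x = \<delta> u" using fv[OF u] x by simp
            moreover have "f' \<tau> \<delta> (x @ [j]) = \<delta> (u @ [j])" using fv[OF uj] x by simp
            ultimately show ?thesis using dpr[OF uj] by simp
          next
            case False
            show ?thesis
            proof (cases "\<exists>u. x @ [j] = v @ u")
              case True
              then obtain u where u: "x @ [j] = v @ u" by blast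
              have "u = []"
              proof (rule ccontr)
                assume "u \<noteq> []"
                then obtain w where "x = v @ w" using snoc_prefix[OF u] by blast
                then show False using False by blast
              qed
              then have xjv: "x @ [j] = v" using u by simp
              have a1: "f' \<tau> \<delta> x = \<sigma>0 x" by (rule fo[OF xV False])
              have "f' \<tau> \<delta> v = \<delta> []" using fv[of "[]"] by simp
              then have a2: "f' \<tau> \<delta> (x @ [j]) = \<sigma>0 (x @ [j])"
                using xjv d(2) tauv by simp
              show ?thesis using a1 a2 Ppr[OF s0 xj] by simp
            next
              case False2: False
              have a1: "f' \<tau> \<delta> x = \<sigma>0 x" by (rule fo[OF xV False])
              have a2: "f' \<tau> \<delta> (x @ [j]) = \<sigma>0 (x @ [j])" by (rule fo[OF xj False2])
              show ?thesis using a1 a2 Ppr[OF s0 xj] by simp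
            qed
          qed
        qed
        have R: "R (f' \<tau> \<delta>) = \<tau>"
        proof
          fix x show "R (f' \<tau> \<delta>) x = \<tau> x"
          proof (cases "x \<in> V \<and> \<not> desc x")
            case True
            then have Rx: "R (f' \<tau> \<delta>) x = f' \<tau> \<delta> x" unfolding R_def by simp
            show ?thesis
            proof (cases "\<exists>u. x = v @ u")
              case True2: True
              then have xv: "x = v" using True unfolding desc_def by auto
              have "f' \<tau> \<delta> v = \<delta> []" using fv[of "[]"] by simp
              then show ?thesis using Rx xv d(2) by simp
            next
              case False
              then show ?thesis using Rx fo[OF _ False] taux[OF _ False] True by simp
            qed
          next
            case False
            then have "R (f' \<tau> \<delta>) x = undefined" "R \<sigma>0 x = undefined" unfolding R_def by auto
            then show ?thesis using tau by simp
          qed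
        qed
        have pr': "\<forall>x j. x @ [j] \<in> tree_vertices b n \<longrightarrow> f' \<tau> \<delta> x \<noteq> f' \<tau> \<delta> (x @ [j])"
          using pr unfolding V_def by blast
        have "f' \<tau> \<delta> \<in> P"
          unfolding P_def proper_colorings_def using pe pr' unfolding V_def by simp
        then show "\<sigma> \<in> {\<sigma> \<in> P. R \<sigma> = \<tau>}" using R s by simp
      qed
    qed
  qed
  have tauk: "\<tau> v < k" if "\<tau> \<in> R ` P" for \<tau>
    using that Ppe vinV nd unfolding R_def by (auto simp: PiE_def Pi_def)
  have nfeq: "nf b k h \<sigma> v = nf b k h (f \<sigma>) []" for \<sigma>
    by (rule nf_cong) (auto simp: f_def tree_vertices_def)
  note SB = subtree_bound[OF k2 beta ineq, of h]
  have fibbound: "real (card {\<sigma> \<in> {\<sigma> \<in> P. nf b k h \<sigma> v}. R \<sigma> = \<tau>}) \<le> \<beta> * real (card {\<sigma> \<in> P. R \<sigma> = \<tau>})"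
    if t: "\<tau> \<in> R ` P" for \<tau>
  proof -
    have "card {\<sigma> \<in> {\<sigma> \<in> P. nf b k h \<sigma> v}. R \<sigma> = \<tau>} = card {\<sigma> \<in> {\<sigma> \<in> P. R \<sigma> = \<tau>}. nf b k h (f \<sigma>) []}"
      by (rule arg_cong[where f=card]) (use nfeq in auto)
    also have "\<dots> = card {\<delta> \<in> {\<delta> \<in> proper_colorings b h k. \<delta> [] = \<tau> v}. nf b k h \<delta> []}"
      by (rule bij_card_filter[OF fib[OF t]])
    also have "\<dots> = card {\<delta> \<in> proper_colorings b h k. \<delta> [] = \<tau> v \<and> nf b k h \<delta> []}"
      by (rule arg_cong[where f=card]) auto
    finally have "real (card {\<sigma> \<in> {\<sigma> \<in> P. nf b k h \<sigma> v}. R \<sigma> = \<tau>}) \<le> \<beta> * real (Nf b k h)"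
      using SB tauk[OF t] by simp
    also have "Nf b k h = card {\<delta> \<in> proper_colorings b h k. \<delta> [] = \<tau> v}"
      using SB tauk[OF t] by simp
    also have "\<dots> = card {\<sigma> \<in> P. R \<sigma> = \<tau>}"
      using bij_betw_same_card[OF fib[OF t]] by simp
    finally show ?thesis .
  qed
  have "card {\<sigma> \<in> P. nf b k h \<sigma> v} = (\<Sum>\<tau>\<in>R ` P. \<Sum>x\<in>{x \<in> {\<sigma> \<in> P. nf b k h \<sigma> v}. R x = \<tau>}. 1)"
    by (subst sum.group) (use finP in auto)
  then have "real (card {\<sigma> \<in> P. nf b k h \<sigma> v}) = (\<Sum>\<tau>\<in>R ` P. real (card {x \<in> {\<sigma> \<in> P. nf b k h \<sigma> v}. R x = \<tau>}))"
    by simp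
  also have "\<dots> \<le> (\<Sum>\<tau>\<in>R ` P. \<beta> * real (card {\<sigma> \<in> P. R \<sigma> = \<tau>}))"
    by (rule sum_mono) (rule fibbound)
  also have "\<dots> = \<beta> * real (\<Sum>\<tau>\<in>R ` P. card {\<sigma> \<in> P. R \<sigma> = \<tau>})"
    by (simp add: sum_distrib_left)
  also have "(\<Sum>\<tau>\<in>R ` P. card {\<sigma> \<in> P. R \<sigma> = \<tau>}) = card P"
  proof -
    have "(\<Sum>\<tau>\<in>R ` P. \<Sum>x\<in>{x \<in> P. R x = \<tau>}. (1::nat)) = (\<Sum>x\<in>P. 1)"
      by (rule sum.group) (use finP in auto)
    then show ?thesis by simp
  qed
  finally show ?thesis unfolding P_def h_def .
qed

lemma real_part:
  fixes C :: real and b k :: nat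
  defines "\<beta> \<equiv> real b powr (- (1/C - 1))"
  assumes C: "0 < C" "C < 1" and b1: "1 \<le> real b" and L3: "3 \<le> ln (real b)"
    and E2: "ln (real b) * \<beta> \<le> C"
    and k2: "2 \<le> k" and kq: "real k \<le> C * real b / ln (real b)"
  shows "real (k-1) * (real k - 2 + \<beta>)^b \<le> \<beta> * real (k-1)^b"
proof -
  define L where "L = ln (real b)"
  define K where "K = real (k - 1)"
  define q where "q = C * real b / L"
  have bpos: "0 < real b" using b1 by simp
  have Lpos: "0 < L" using L3 L_def by simp
  have eL: "exp L = real b" using bpos L_def by simp
  have beta: "\<beta> = exp (L - L / C)"
    using bpos unfolding \<beta>_def L_def powr_def by (simp add: algebra_simps diff_divide_distrib)
  have bpos': "0 < \<beta>" unfolding beta by simp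
  have b_le1: "\<beta> \<le> 1"
  proof -
    have "L / C \<ge> L" using C Lpos by (simp add: le_divide_eq)
    then show ?thesis unfolding beta by simp
  qed
  have K: "K = real k - 1" "1 \<le> K" using k2 unfolding K_def by auto
  have Kq: "K \<le> q" using kq K unfolding q_def L_def by simp
  define x where "x = (1 - \<beta>) / K"
  have x0: "0 \<le> x" and x1: "x \<le> 1" using b_le1 bpos' K unfolding x_def by (auto simp: divide_le_eq)
  have eq1: "real k - 2 + \<beta> = K * (1 - x)"
  proof -
    have "K \<noteq> 0" using K by simp
    then have "K * x = 1 - \<beta>" unfolding x_def by simp
    then have "K * (1 - x) = K - (1 - \<beta>)" by (simp add: right_diff_distrib)
    then show ?thesis using K(1) by simp
  qed
  have pw: "(1 - x) ^ b \<le> exp (- (real b * x))"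
  proof -
    have "(1 - x) ^ b \<le> exp (- x) ^ b"
      by (rule power_mono) (use exp_ge_add_one_self[of "-x"] x1 in auto)
    also have "\<dots> = exp (- (real b * x))" by (simp add: exp_of_nat_mult[symmetric])
    finally show ?thesis .
  qed
  have main: "K * exp (- (real b * x)) \<le> \<beta>"
  proof -
    have qpos: "0 < q" using K Kq by simp
    have "real b * (1 - \<beta>) / q \<le> real b * (1 - \<beta>) / K"
      using K Kq b_le1 bpos by (intro divide_left_mono) auto
    then have "exp (- (real b * x)) \<le> exp (- (real b * (1 - \<beta>) / q))" unfolding x_def by simp
    then have "K * exp (- (real b * x)) \<le> q * exp (- (real b * (1 - \<beta>) / q))"
      using Kq K by (intro mult_mono) auto
    also have "real b * (1 - \<beta>) / q = L / C - \<beta> * L / C"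
      using C Lpos bpos unfolding q_def by (simp add: field_simps)
    also have "q * exp (- (L / C - \<beta> * L / C)) = (C / L) * exp (\<beta> * L / C) * \<beta>"
    proof -
      have "q = (C / L) * exp L" unfolding q_def eL by simp
      then have "q * exp (- (L / C - \<beta> * L / C)) = (C / L) * (exp L * exp (- (L / C)) * exp (\<beta> * L / C))"
        by (simp add: exp_add[symmetric])
      also have "exp L * exp (- (L / C)) = \<beta>" unfolding beta by (simp add: exp_add[symmetric])
      finally show ?thesis by simp
    qed
    also have "\<dots> \<le> 1 * \<beta>"
    proof (rule mult_right_mono)
      have "\<beta> * L / C \<le> 1" using E2 C unfolding L_def by (simp add: mult.commute)
      then have "exp (\<beta> * L / C) \<le> exp 1" by simp
      also have "\<dots> \<le> 3" by (rule exp_le)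
      finally have "C * exp (\<beta> * L / C) \<le> L"
        using C L3 L_def by (smt (verit) exp_gt_zero mult_left_le_one_le)
      then show "C / L * exp (\<beta> * L / C) \<le> 1" using Lpos by (simp add: divide_le_eq)
    qed (use bpos' in simp)
    finally show ?thesis by simp
  qed
  have "real (k-1) * (real k - 2 + \<beta>)^b = K ^ b * (K * (1 - x) ^ b)"
    unfolding eq1 K_def by (simp add: power_mult_distrib)
  also have "\<dots> \<le> K ^ b * (K * exp (- (real b * x)))"
    using pw K by (intro mult_left_mono) auto
  also have "\<dots> \<le> K ^ b * \<beta>" using main K by (intro mult_left_mono) auto
  finally show ?thesis unfolding K_def by (simp add: mult.commute)
qed

lemma ev_facts:
  fixes C :: real assumes C: "0 < C" "C < 1"
  shows "eventually (\<lambda>y::real. 1 \<le> y \<and> 3 \<le> ln y \<and> ln y * y powr (- (1/C - 1)) \<le> C \<and> 3 \<le> C * y / ln y) at_top"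
proof -
  define e where "e = 1/C - 1"
  have e: "e > 0" using C unfolding e_def by (simp add: field_simps)
  have t1: "((\<lambda>y::real. ln y * y powr (-e)) \<longlongrightarrow> 0) at_top" using e by real_asymp
  have "eventually (\<lambda>y::real. ln y * y powr (-e) < C) at_top"
    using order_tendstoD(2)[OF t1 C(1)] .
  moreover have "filterlim (\<lambda>y::real. C * y / ln y) at_top at_top" using C(1) by real_asymp
  then have "eventually (\<lambda>y::real. 3 \<le> C * y / ln y) at_top" by (simp add: filterlim_at_top)
  moreover have "filterlim (\<lambda>y::real. ln y) at_top at_top" by real_asymp
  then have "eventually (\<lambda>y::real. 3 \<le> ln y) at_top" by (simp add: filterlim_at_top)
  moreover have "eventually (\<lambda>y::real. 1 \<le> y) at_top" by (rule eventually_ge_at_top)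
  ultimately show ?thesis unfolding e_def by eventually_elim auto
qed

theorem lemma7:
  fixes C :: real
  assumes "0 < C" and "C < 1"
  shows "\<exists>B. \<forall>b::nat \<ge> B. \<forall>n::nat. \<forall>v \<in> tree_vertices b n.
           prob_not_frozen b n (nat \<lfloor>real b / ((1 + (1/C - 1)) * ln (real b))\<rfloor>) v
             \<le> real b powr (- (1/C - 1))"
proof -
  obtain N where N: "\<And>y. y \<ge> N \<Longrightarrow> 1 \<le> y \<and> 3 \<le> ln y \<and> ln y * y powr (- (1/C - 1)) \<le> C \<and> 3 \<le> C * y / ln y"
    using ev_facts[OF assms] unfolding eventually_at_top_linorder by blast
  show ?thesis
  proof (intro exI[of _ "nat \<lceil>N\<rceil>"] allI impI ballI)
    fix b :: nat and n v assume bB: "nat \<lceil>N\<rceil> \<le> b" and vV: "v \<in> tree_vertices b n"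
    have "N \<le> real b" using bB by linarith
    note F = N[OF this]
    define k where "k = nat \<lfloor>real b / ((1 + (1/C - 1)) * ln (real b))\<rfloor>"
    define \<beta> where "\<beta> = real b powr (- (1/C - 1))"
    define q where "q = C * real b / ln (real b)"
    have qeq: "real b / ((1 + (1/C - 1)) * ln (real b)) = q"
      unfolding q_def using assms by simp
    have q3: "3 \<le> q" using F q_def by simp
    have k2: "2 \<le> k" unfolding k_def qeq using q3 by linarith
    have kq: "real k \<le> C * real b / ln (real b)" unfolding k_def qeq q_def[symmetric] using q3 by linarith
    have ineq: "real (k-1) * (real k - 2 + \<beta>)^b \<le> \<beta> * real (k-1)^b"
      unfolding \<beta>_def by (rule real_part) (use assms F k2 kq in auto)
    have beta0: "0 \<le> \<beta>" unfolding \<beta>_def by simp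
    have tb: "real (card {\<sigma> \<in> proper_colorings b n k. nf b k (n - length v) \<sigma> v})
       \<le> \<beta> * real (card (proper_colorings b n k))"
      by (rule top_bound[OF k2 beta0 ineq vV])
    have "card {\<sigma> \<in> proper_colorings b n k. \<not> frozen b n k \<sigma> v}
        \<le> card {\<sigma> \<in> proper_colorings b n k. nf b k (n - length v) \<sigma> v}"
    proof (rule card_mono)
      show "finite {\<sigma> \<in> proper_colorings b n k. nf b k (n - length v) \<sigma> v}"
        by (rule finite_subset[OF _ pc_finite]) blast
      show "{\<sigma> \<in> proper_colorings b n k. \<not> frozen b n k \<sigma> v}
        \<subseteq> {\<sigma> \<in> proper_colorings b n k. nf b k (n - length v) \<sigma> v}"
        using frozen_if_not_nf[OF vV, of k] by blast
    qed
    then have le: "real (card {\<sigma> \<in> proper_colorings b n k. \<not> frozen b n k \<sigma> v})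
        \<le> \<beta> * real (card (proper_colorings b n k))" using tb by linarith
    have "prob_not_frozen b n k v \<le> \<beta>"
    proof (cases "card (proper_colorings b n k) = 0")
      case True then show ?thesis unfolding prob_not_frozen_def using beta0 by simp
    next
      case False then show ?thesis unfolding prob_not_frozen_def using le
        by (simp add: divide_le_eq)
    qed
    then show "prob_not_frozen b n (nat \<lfloor>real b / ((1 + (1/C - 1)) * ln (real b))\<rfloor>) v
             \<le> real b powr (- (1/C - 1))" unfolding k_def \<beta>_def .
  qed
qed

end
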